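(* Let $G$ be an oriented graph derived from a Burling tree $T$ and let $uv$ be a top arc of $G$ with respect to $T$ such that $u$ is a source of $G$. Let $G'$ be obtained from $G$ by top-subdividing $uv$ (removing the arc $uv$ and adding a new vertex $w$ with arcs $wv$ and $wu$). Then $G'$ can be derived from a Burling tree $T'$ in such a way that, with respect to $T'$: $wv$ is a top arc of $G'$; $wu$ is a bottom arc of $G'$; every top arc of $G$ with respect to $T$ other than $uv$ is a top arc of $G'$; and every bottom arc of $G$ with respect to $T$ other than $uv$ is a bottom arc of $G'$.
   Context: Oriented graphs are finite, without loops, multiple arcs or pairs of opposite arcs. In a rooted tree $T$ with root $r$, each non-root vertex $v$ has a parent $p(v)$; children, leaves, ancestors and descendants are as usual. A branch is a sequence $v_1\dots v_k$ ($k\ge0$) with $v_i$ the parent of $v_{i+1}$; it starts at $v_1$. A Burling tree is a 4-tuple $(T,r,\ell,c)$: $T$ a rooted tree with root $r$; $\ell$ assigns to each non-leaf vertex $v$ one of its children $\ell(v)$ (the last-born of $v$); $c$ assigns to every vertex $v$ that is neither the root nor a last-born the vertex-set of a (possibly empty) branch starting at $\ell(p(v))$, and $c(v)=\emptyset$ if $v$ is the root or a last-born. The oriented graph fully derived from it has vertex-set $V(T)$ and an arc $uv$ iff $v\in c(u)$; an oriented graph is derived from the Burling tree if it is an induced subgraph of the fully derived one. If $G$ is derived from $T$ and $uv$ is an arc of $G$, then all out-neighbors of $u$ lie on one branch of $T$; $uv$ is a top arc with respect to $T$ if $v$ is the out-neighbor of $u$ closest in $T$ to the root, and a bottom arc with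 respect to $T$ if $v$ is the out-neighbor of $u$ furthest in $T$ from the root. *)

theory Defs
  imports Main
begin

definition oriented_graph :: "'a set \<Rightarrow> ('a \<times> 'a) set \<Rightarrow> bool" where
  "oriented_graph V A \<longleftrightarrow> finite V \<and> A \<subseteq> V \<times> V \<and>
     (\<forall>x. (x, x) \<notin> A) \<and> (\<forall>x y. (x, y) \<in> A \<longrightarrow> (y, x) \<notin> A)"

definition is_source :: "('a \<times> 'a) set \<Rightarrow> 'a \<Rightarrow> bool" where
  "is_source A u \<longleftrightarrow> (\<forall>x. (x, u) \<notin> A)"

definition top_subdiv_vertices :: "'a set \<Rightarrow> 'a \<Rightarrow> 'a set" where
  "top_subdiv_vertices V w = insert w V"

definition top_subdiv_arcs :: "('a \<times> 'a) set \<Rightarrow> 'a \<Rightarrow> 'a \<Rightarrow> 'a \<Rightarrow> ('a \<times> 'a) set" where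
  "top_subdiv_arcs A u v w = (A - {(u, v)}) \<union> {(w, v), (w, u)}"

text \<open>A rooted tree is given by its vertex set, its root and a parent function
  (the value of the parent function at the root is irrelevant).
  lb is the last-born function and cf the function c.\<close>

record 'a btree =
  tverts :: "'a set"
  troot :: 'a
  tpar :: "'a \<Rightarrow> 'a"
  tlb :: "'a \<Rightarrow> 'a"
  tc :: "'a \<Rightarrow> 'a set"

definition rooted_tree :: "'a btree \<Rightarrow> bool" where
  "rooted_tree T \<longleftrightarrow> finite (tverts T) \<and> troot T \<in> tverts T \<and>
     (\<forall>x \<in> tverts T - {troot T}. tpar T x \<in> tverts T) \<and>
     (\<forall>x \<in> tverts T. \<exists>n. (tpar T ^^ n) x = troot T \<and> (\<forall>i<n. (tpar T ^^ i) x \<noteq> troot T))"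

definition children :: "'a btree \<Rightarrow> 'a \<Rightarrow> 'a set" where
  "children T x = {y \<in> tverts T - {troot T}. tpar T y = x}"

definition is_leaf :: "'a btree \<Rightarrow> 'a \<Rightarrow> bool" where
  "is_leaf T x \<longleftrightarrow> children T x = {}"

definition is_last_born :: "'a btree \<Rightarrow> 'a \<Rightarrow> bool" where
  "is_last_born T y \<longleftrightarrow> (\<exists>x \<in> tverts T. \<not> is_leaf T x \<and> tlb T x = y)"

definition branch_set :: "'a btree \<Rightarrow> 'a \<Rightarrow> 'a set \<Rightarrow> bool" where
  "branch_set T x B \<longleftrightarrow> B = {} \<or>
     (\<exists>y n. y \<in> tverts T \<and> (tpar T ^^ n) y = x \<and> (\<forall>i<n. (tpar T ^^ i) y \<noteq> troot T) \<and>
        B = {(tpar T ^^ i) y | i. i \<le> n})"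

definition burling_tree :: "'a btree \<Rightarrow> bool" where
  "burling_tree T \<longleftrightarrow> rooted_tree T \<and>
     (\<forall>x \<in> tverts T. \<not> is_leaf T x \<longrightarrow> tlb T x \<in> children T x) \<and>
     (\<forall>x \<in> tverts T. (x = troot T \<or> is_last_born T x) \<longrightarrow> tc T x = {}) \<and>
     (\<forall>x \<in> tverts T. x \<noteq> troot T \<and> \<not> is_last_born T x \<longrightarrow>
         branch_set T (tlb T (tpar T x)) (tc T x))"

definition fd_arc :: "'a btree \<Rightarrow> 'a \<Rightarrow> 'a \<Rightarrow> bool" where
  "fd_arc T x y \<longleftrightarrow> x \<in> tverts T \<and> y \<in> tverts T \<and> y \<in> tc T x"

text \<open>The graph (V, A) is derived from T via the vertex embedding f: it is (via f) an
  induced subgraph of the fully derived graph. With f = id this is literally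
  "induced subgraph".\<close>

definition derived_via :: "('a \<Rightarrow> 'b) \<Rightarrow> 'b btree \<Rightarrow> 'a set \<Rightarrow> ('a \<times> 'a) set \<Rightarrow> bool" where
  "derived_via f T V A \<longleftrightarrow> inj_on f V \<and> f ` V \<subseteq> tverts T \<and> A \<subseteq> V \<times> V \<and>
     (\<forall>x \<in> V. \<forall>y \<in> V. (x, y) \<in> A \<longleftrightarrow> fd_arc T (f x) (f y))"

definition depth :: "'a btree \<Rightarrow> 'a \<Rightarrow> nat" where
  "depth T x = (LEAST n. (tpar T ^^ n) x = troot T)"

definition top_arc :: "('a \<Rightarrow> 'b) \<Rightarrow> 'b btree \<Rightarrow> ('a \<times> 'a) set \<Rightarrow> 'a \<Rightarrow> 'a \<Rightarrow> bool" where
  "top_arc f T A x y \<longleftrightarrow> (x, y) \<in> A \<and>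
     (\<forall>z. (x, z) \<in> A \<longrightarrow> depth T (f y) \<le> depth T (f z))"

definition bottom_arc :: "('a \<Rightarrow> 'b) \<Rightarrow> 'b btree \<Rightarrow> ('a \<times> 'a) set \<Rightarrow> 'a \<Rightarrow> 'a \<Rightarrow> bool" where
  "bottom_arc f T A x y \<longleftrightarrow> (x, y) \<in> A \<and>
     (\<forall>z. (x, z) \<in> A \<longrightarrow> depth T (f z) \<le> depth T (f y))"

end

theory Submission
  imports Defs
begin


lemma least_depth_eq:
  assumes "(tpar T ^^ n) x = troot T" "\<forall>i<n. (tpar T ^^ i) x \<noteq> troot T"
  shows "depth T x = n"
  unfolding depth_def
proof (rule Least_equality)
  show "(tpar T ^^ n) x = troot T" by fact
  fix m assume "(tpar T ^^ m) x = troot T"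
  then show "n \<le> m" using assms(2) by (meson not_le)
qed

lemma depth_root: "depth T (troot T) = 0"
  by (rule least_depth_eq) auto

lemma funpow_Suc_apply: "(f ^^ Suc n) x = (f ^^ n) (f x)"
  by (simp only: funpow_Suc_right comp_apply)

lemma tree_by_height:
  assumes fin: "finite (tverts T)" and r: "troot T \<in> tverts T"
    and step: "\<And>x. x \<in> tverts T \<Longrightarrow> x \<noteq> troot T \<Longrightarrow> tpar T x \<in> tverts T \<and> h x = Suc (h (tpar T x))"
    and zero: "\<And>x. x \<in> tverts T \<Longrightarrow> h x = 0 \<longleftrightarrow> x = troot T"
  shows "rooted_tree T" "\<And>x. x \<in> tverts T \<Longrightarrow> depth T x = h x"
proof -
  have main: "\<And>x. x \<in> tverts T \<Longrightarrow> h x = n \<Longrightarrow> (tpar T ^^ n) x = troot T \<and> (\<forall>i<n. (tpar T ^^ i) x \<noteq> troot T)" for n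
  proof (induction n)
    case 0
    then have "x = troot T" using zero by blast
    then show ?case by simp
  next
    case (Suc m)
    have xr: "x \<noteq> troot T"
    proof
      assume "x = troot T"
      then have "h x = 0" using zero[OF r] by simp
      then show False using Suc.prems by simp
    qed
    have st: "tpar T x \<in> tverts T" "h (tpar T x) = m" using step[OF Suc.prems(1) xr] Suc.prems by auto
    note IH = Suc.IH[OF st]
    show ?case
    proof (intro conjI allI impI)
      show "(tpar T ^^ Suc m) x = troot T" using IH by (simp only: funpow_Suc_apply)
      fix i assume "i < Suc m"
      then show "(tpar T ^^ i) x \<noteq> troot T"
        using IH xr by (cases i) (auto simp only: funpow_Suc_apply funpow_0 Suc_less_eq)
    qed
  qed
  show "rooted_tree T" unfolding rooted_tree_def
  proof (intro conjI ballI)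
    show "finite (tverts T)" by fact
    show "troot T \<in> tverts T" by fact
  next
    fix x assume "x \<in> tverts T - {troot T}" then show "tpar T x \<in> tverts T" using step by blast
  next
    fix x assume x: "x \<in> tverts T"
    show "\<exists>n. (tpar T ^^ n) x = troot T \<and> (\<forall>i<n. (tpar T ^^ i) x \<noteq> troot T)"
      using main[OF x refl] by (rule exI)
  qed
  fix x assume x: "x \<in> tverts T"
  show "depth T x = h x" using main[OF x refl] by (intro least_depth_eq) simp_all
qed


context
  fixes T :: "'a btree"
  assumes rt: "rooted_tree T"
begin

lemma rt_depth:
  assumes "x \<in> tverts T"
  shows "(tpar T ^^ depth T x) x = troot T" "\<forall>i<depth T x. (tpar T ^^ i) x \<noteq> troot T"
proof -
  obtain n where n: "(tpar T ^^ n) x = troot T" "\<forall>i<n. (tpar T ^^ i) x \<noteq> troot T"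
    using rt assms unfolding rooted_tree_def by blast
  then have "depth T x = n" by (rule least_depth_eq)
  then show "(tpar T ^^ depth T x) x = troot T" "\<forall>i<depth T x. (tpar T ^^ i) x \<noteq> troot T"
    using n by auto
qed

lemma rt_depth_par:
  assumes "x \<in> tverts T" "x \<noteq> troot T"
  shows "depth T x = Suc (depth T (tpar T x))" "tpar T x \<in> tverts T"
proof -
  show "tpar T x \<in> tverts T" using rt assms unfolding rooted_tree_def by blast
  have d0: "depth T x \<noteq> 0" using rt_depth(1)[OF assms(1)] assms(2) by (metis funpow_0)
  then obtain k where k: "depth T x = Suc k" by (cases "depth T x") auto
  have "depth T (tpar T x) = k"
  proof (rule least_depth_eq)
    show "(tpar T ^^ k) (tpar T x) = troot T" using rt_depth(1)[OF assms(1)] k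
      by (simp only: funpow_Suc_apply)
    show "\<forall>i<k. (tpar T ^^ i) (tpar T x) \<noteq> troot T" using rt_depth(2)[OF assms(1)] k
      by (metis Suc_less_eq funpow_Suc_apply)
  qed
  then show "depth T x = Suc (depth T (tpar T x))" using k by simp
qed

lemma rt_depth_zero: "x \<in> tverts T \<Longrightarrow> depth T x = 0 \<longleftrightarrow> x = troot T"
  using rt_depth_par depth_root by fastforce

lemma rt_root: "troot T \<in> tverts T" using rt unfolding rooted_tree_def by blast

lemma rt_iter:
  assumes "x \<in> tverts T" "i \<le> depth T x"
  shows "(tpar T ^^ i) x \<in> tverts T \<and> depth T ((tpar T ^^ i) x) = depth T x - i"
  using assms(2)
proof (induction i)
  case 0 then show ?case using assms(1) by simp
next
  case (Suc i)
  then have IH: "(tpar T ^^ i) x \<in> tverts T" "depth T ((tpar T ^^ i) x) = depth T x - i" by auto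
  have ne: "(tpar T ^^ i) x \<noteq> troot T" using rt_depth(2)[OF assms(1)] Suc.prems by auto
  show ?case using rt_depth_par[OF IH(1) ne] IH Suc.prems by auto
qed

definition ancs :: "'a \<Rightarrow> 'a set" where
  "ancs x = {(tpar T ^^ i) x | i. i \<le> depth T x}"

lemma ancs_root: "ancs (troot T) = {troot T}"
  unfolding ancs_def depth_root by auto

lemma ancs_step:
  assumes "x \<in> tverts T" "x \<noteq> troot T"
  shows "ancs x = insert x (ancs (tpar T x))"
proof -
  have d: "depth T x = Suc (depth T (tpar T x))" using rt_depth_par assms by blast
  show ?thesis
  proof
    show "ancs x \<subseteq> insert x (ancs (tpar T x))"
    proof
      fix a assume "a \<in> ancs x"
      then obtain i where i: "i \<le> depth T x" "a = (tpar T ^^ i) x" unfolding ancs_def by blast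
      show "a \<in> insert x (ancs (tpar T x))"
      proof (cases i)
        case 0 then show ?thesis using i by simp
      next
        case (Suc j) then show ?thesis using i d unfolding ancs_def
          by (auto simp only: funpow_Suc_apply)
      qed
    qed
    show "insert x (ancs (tpar T x)) \<subseteq> ancs x"
    proof
      fix a assume "a \<in> insert x (ancs (tpar T x))"
      then show "a \<in> ancs x"
      proof
        assume "a = x" then show ?thesis unfolding ancs_def by (metis (mono_tags, lifting) funpow_0 mem_Collect_eq zero_le)
      next
        assume "a \<in> ancs (tpar T x)"
        then obtain i where i: "i \<le> depth T (tpar T x)" "a = (tpar T ^^ i) (tpar T x)" unfolding ancs_def by blast
        then have "a = (tpar T ^^ Suc i) x" "Suc i \<le> depth T x" using d by (simp_all only: funpow_Suc_apply)
        then show ?thesis unfolding ancs_def by blast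
      qed
    qed
  qed
qed

lemma ancs_induct[consumes 1, case_names root step]:
  assumes "x \<in> tverts T"
    and "P (troot T)"
    and "\<And>x. x \<in> tverts T \<Longrightarrow> x \<noteq> troot T \<Longrightarrow> P (tpar T x) \<Longrightarrow> P x"
  shows "P x"
proof -
  have "\<And>x. x \<in> tverts T \<Longrightarrow> depth T x = n \<Longrightarrow> P x" for n
  proof (induction n)
    case 0 then have "x = troot T" using rt_depth_zero by blast
    then show ?case using assms(2) by simp
  next
    case (Suc n)
    then have "x \<noteq> troot T" using depth_root by (metis nat.distinct(1))
    then show ?case using Suc rt_depth_par assms(3) by auto
  qed
  then show ?thesis using assms(1) by blast
qed

lemma ancs_props:
  assumes "x \<in> tverts T"
  shows "x \<in> ancs x \<and> (\<forall>a\<in>ancs x. a \<in> tverts T \<and> depth T a \<le> depth T x \<and> (depth T a = depth T x \<longrightarrow> a = x))"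
  using assms
proof (induction rule: ancs_induct)
  case root then show ?case using assms rt_root ancs_root by auto
next
  case (step x)
  then show ?case using ancs_step[OF step(1,2)] rt_depth_par[OF step(1,2)] by auto
qed

lemma ancs_self: "x \<in> tverts T \<Longrightarrow> x \<in> ancs x" using ancs_props by blast
lemma ancs_in: "x \<in> tverts T \<Longrightarrow> a \<in> ancs x \<Longrightarrow> a \<in> tverts T" using ancs_props by blast
lemma ancs_depth: "x \<in> tverts T \<Longrightarrow> a \<in> ancs x \<Longrightarrow> depth T a \<le> depth T x" using ancs_props by blast
lemma ancs_depth_eq: "x \<in> tverts T \<Longrightarrow> a \<in> ancs x \<Longrightarrow> depth T a = depth T x \<Longrightarrow> a = x" using ancs_props by blast

lemma ancs_trans:
  assumes "c \<in> tverts T" "b \<in> ancs c" "a \<in> ancs b"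
  shows "a \<in> ancs c"
  using assms
proof (induction c rule: ancs_induct)
  case root then show ?case using ancs_root by auto
next
  case (step x)
  then show ?case using ancs_step[OF step(1,2)] by auto
qed

lemma ancs_chain:
  assumes "y \<in> tverts T" "a \<in> ancs y" "b \<in> ancs y" "depth T a \<le> depth T b"
  shows "a \<in> ancs b"
  using assms
proof (induction y rule: ancs_induct)
  case root then show ?case using ancs_root by auto
next
  case (step x)
  note st = ancs_step[OF step(1,2)]
  have px: "tpar T x \<in> tverts T" "depth T x = Suc (depth T (tpar T x))" using rt_depth_par step by auto
  show ?case
  proof (cases "b = x")
    case True then show ?thesis using step by auto
  next
    case False
    then have b: "b \<in> ancs (tpar T x)" using step st by auto
    show ?thesis
    proof (cases "a = x")
      case True
      then show ?thesis using ancs_depth[OF px(1) b] px step(6) by simp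
    next
      case False then show ?thesis using step st b by auto
    qed
  qed
qed

lemma branch_char:
  "branch_set T s B \<longleftrightarrow> B = {} \<or> (\<exists>y\<in>tverts T. s \<in> ancs y \<and> B = {a \<in> ancs y. depth T s \<le> depth T a})"
proof -
  have seteq: "{(tpar T ^^ i) y | i. i \<le> n} = {a \<in> ancs y. depth T ((tpar T ^^ n) y) \<le> depth T a}"
    if y: "y \<in> tverts T" and n: "n \<le> depth T y" for y n
  proof -
    have dn: "depth T ((tpar T ^^ n) y) = depth T y - n" using rt_iter[OF y n] by blast
    show ?thesis
    proof (intro equalityI subsetI)
      fix a assume "a \<in> {(tpar T ^^ i) y | i. i \<le> n}"
      then obtain i where i: "i \<le> n" "a = (tpar T ^^ i) y" by blast
      have "depth T a = depth T y - i" using rt_iter[OF y] i n by auto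
      then show "a \<in> {a \<in> ancs y. depth T ((tpar T ^^ n) y) \<le> depth T a}"
        using i n dn unfolding ancs_def by auto
    next
      fix a assume "a \<in> {a \<in> ancs y. depth T ((tpar T ^^ n) y) \<le> depth T a}"
      then obtain i where i: "i \<le> depth T y" "a = (tpar T ^^ i) y" "depth T y - n \<le> depth T a"
        unfolding ancs_def using dn by auto
      have "depth T a = depth T y - i" using rt_iter[OF y] i by auto
      then have "i \<le> n" using i n by auto
      then show "a \<in> {(tpar T ^^ i) y | i. i \<le> n}" using i by blast
    qed
  qed
  show ?thesis
  proof
    assume "branch_set T s B"
    then show "B = {} \<or> (\<exists>y\<in>tverts T. s \<in> ancs y \<and> B = {a \<in> ancs y. depth T s \<le> depth T a})"
      unfolding branch_set_def
    proof
      assume "\<exists>y n. y \<in> tverts T \<and> (tpar T ^^ n) y = s \<and> (\<forall>i<n. (tpar T ^^ i) y \<noteq> troot T) \<and>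
        B = {(tpar T ^^ i) y | i. i \<le> n}"
      then obtain y n where yn: "y \<in> tverts T" "(tpar T ^^ n) y = s" "\<forall>i<n. (tpar T ^^ i) y \<noteq> troot T"
        "B = {(tpar T ^^ i) y | i. i \<le> n}" by blast
      have nd: "n \<le> depth T y" using rt_depth(1)[OF yn(1)] yn(3) by (meson not_le)
      have "s \<in> ancs y" unfolding ancs_def using yn(2) nd by blast
      moreover have "B = {a \<in> ancs y. depth T s \<le> depth T a}" using seteq[OF yn(1) nd] yn(2,4) by simp
      ultimately show ?thesis using yn(1) by blast
    qed simp
  next
    assume "B = {} \<or> (\<exists>y\<in>tverts T. s \<in> ancs y \<and> B = {a \<in> ancs y. depth T s \<le> depth T a})"
    then show "branch_set T s B"
    proof
      assume "B = {}" then show ?thesis unfolding branch_set_def by simp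
    next
      assume "\<exists>y\<in>tverts T. s \<in> ancs y \<and> B = {a \<in> ancs y. depth T s \<le> depth T a}"
      then obtain y where y: "y \<in> tverts T" "s \<in> ancs y" "B = {a \<in> ancs y. depth T s \<le> depth T a}" by blast
      then obtain n where n: "n \<le> depth T y" "s = (tpar T ^^ n) y" unfolding ancs_def by blast
      have "\<forall>i<n. (tpar T ^^ i) y \<noteq> troot T"
      proof (intro allI impI)
        fix i assume "i < n"
        then have "depth T ((tpar T ^^ i) y) \<noteq> 0" using rt_iter[OF y(1), of i] n by auto
        then show "(tpar T ^^ i) y \<noteq> troot T" using depth_root by metis
      qed
      moreover have "B = {(tpar T ^^ i) y | i. i \<le> n}" using y n seteq[OF y(1) n(1)] by simp
      ultimately show ?thesis using y(1) n(2) unfolding branch_set_def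
        by (intro disjI2 exI[of _ y] exI[of _ n]) simp
    qed
  qed
qed

end


locale L =
  fixes T :: "'a btree" and V :: "'a set" and A :: "('a \<times> 'a) set" and u v w :: 'a
  assumes bt: "burling_tree T"
    and og: "oriented_graph V A"
    and dv: "derived_via id T V A"
    and ta: "top_arc id T A u v"
    and src: "is_source A u"
    and wV: "w \<notin> V"
begin

abbreviation "P \<equiv> tpar T"
abbreviation "r \<equiv> troot T"
abbreviation "Vt \<equiv> tverts T"
abbreviation "h \<equiv> depth T"
abbreviation "c \<equiv> tc T"
abbreviation "lb \<equiv> tlb T"
abbreviation "an \<equiv> ancs T"

lemma rt: "rooted_tree T" using bt unfolding burling_tree_def by blast
lemma VVt: "V \<subseteq> Vt" using dv unfolding derived_via_def by auto
lemma AV: "A \<subseteq> V \<times> V" using dv unfolding derived_via_def by auto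
lemma arc_iff: "x \<in> V \<Longrightarrow> y \<in> V \<Longrightarrow> (x, y) \<in> A \<longleftrightarrow> y \<in> c x"
  using dv VVt unfolding derived_via_def fd_arc_def by auto
lemma uvA: "(u, v) \<in> A" using ta unfolding top_arc_def by blast
lemma uV: "u \<in> V" and vV: "v \<in> V" using uvA AV by auto
lemma uVt: "u \<in> Vt" and vVt: "v \<in> Vt" using uV vV VVt by auto
lemma uv: "u \<noteq> v" using og uvA unfolding oriented_graph_def by blast
lemma uw: "u \<noteq> w" and vw: "v \<noteq> w" using uV vV wV by auto
lemma v_cu: "v \<in> c u" using arc_iff uV vV uvA by blast
lemma u_cu: "u \<notin> c u" using arc_iff[OF uV uV] og unfolding oriented_graph_def by blast
lemma top_v: "y \<in> V \<Longrightarrow> y \<in> c u \<Longrightarrow> h v \<le> h y"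
  using ta arc_iff[OF uV] unfolding top_arc_def by auto
lemma no_into_u: "x \<in> V \<Longrightarrow> u \<notin> c x"
  using src arc_iff uV unfolding is_source_def by blast

lemma bt1: "\<forall>x\<in>Vt. \<not> is_leaf T x \<longrightarrow> lb x \<in> children T x"
  using bt unfolding burling_tree_def by (elim conjE)
lemma bt2: "\<forall>x\<in>Vt. (x = r \<or> is_last_born T x) \<longrightarrow> c x = {}"
  using bt unfolding burling_tree_def by (elim conjE)
lemma bt3: "\<forall>x\<in>Vt. x \<noteq> r \<and> \<not> is_last_born T x \<longrightarrow> branch_set T (lb (P x)) (c x)"
  using bt unfolding burling_tree_def by (elim conjE)

lemma c_empty: "x \<in> Vt \<Longrightarrow> (x = r \<or> is_last_born T x) \<Longrightarrow> c x = {}"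
  using bt2 by blast

lemma c_branch:
  assumes "x \<in> Vt" "c x \<noteq> {}"
  obtains y where "y \<in> Vt" "lb (P x) \<in> an y" "c x = {a \<in> an y. h (lb (P x)) \<le> h a}"
proof -
  have "x \<noteq> r" "\<not> is_last_born T x" using c_empty assms by blast+
  then have br: "branch_set T (lb (P x)) (c x)" using bt3 assms(1) by blast
  have "c x = {} \<or> (\<exists>y\<in>Vt. lb (P x) \<in> an y \<and> c x = {a \<in> an y. h (lb (P x)) \<le> h a})"
    using iffD1[OF branch_char[OF rt] br] .
  then show ?thesis using that assms(2) by blast
qed

lemma c_sub:
  assumes "x \<in> Vt" "c x \<noteq> {}"
  obtains y where "y \<in> Vt" "c x \<subseteq> an y"
proof -
  obtain y where y: "y \<in> Vt" "c x = {a \<in> an y. h (lb (P x)) \<le> h a}"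
    using c_branch[OF assms] by metis
  then have "c x \<subseteq> an y" by auto
  then show ?thesis using that y(1) by simp
qed

lemma u_nonroot: "u \<noteq> r" using c_empty[OF uVt] v_cu by blast

definition D :: "'a \<Rightarrow> bool" where "D z \<longleftrightarrow> v \<in> an z \<and> z \<noteq> v"
definition E :: "'a \<Rightarrow> bool" where "E x \<longleftrightarrow> v \<in> c x \<and> (\<exists>z\<in>c x. D z)"

lemma D_root: "\<not> D r" unfolding D_def using ancs_root[OF rt] by auto
lemma D_v: "\<not> D v" unfolding D_def by auto

lemma D_step:
  assumes "x \<in> Vt" "x \<noteq> r"
  shows "P x = v \<Longrightarrow> D x" "P x \<noteq> v \<Longrightarrow> D x = D (P x)"
proof -
  have st: "an x = insert x (an (P x))" using ancs_step[OF rt assms] .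
  have dp: "h x = Suc (h (P x))" "P x \<in> Vt" using rt_depth_par[OF rt assms] by auto
  {
    assume pv: "P x = v"
    have "v \<in> an x" using st pv ancs_self[OF rt dp(2)] by simp
    moreover have "x \<noteq> v" using dp(1) pv by auto
    ultimately show "D x" unfolding D_def by simp
  }
  assume pv: "P x \<noteq> v"
  show "D x = D (P x)"
  proof (cases "x = v")
    case True
    have "v \<notin> an (P x)"
    proof
      assume "v \<in> an (P x)"
      then have "h v \<le> h (P x)" using ancs_depth[OF rt dp(2)] by simp
      then show False using dp(1) True by simp
    qed
    then show ?thesis unfolding D_def using True by simp
  next
    case False
    then show ?thesis unfolding D_def using st pv by simp
  qed
qed

lemma D_mono:
  assumes "b \<in> Vt" "a \<in> an b" "D a" shows "D b"
proof -
  have va: "v \<in> an a" "a \<noteq> v" using assms(3) unfolding D_def by simp_all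
  have vb: "v \<in> an b" using ancs_trans[OF rt assms(1,2) va(1)] .
  have aVt: "a \<in> Vt" using ancs_in[OF rt assms(1,2)] .
  have "b \<noteq> v"
  proof
    assume bv: "b = v"
    have "h a \<le> h v" using ancs_depth[OF rt assms(1,2)] bv by simp
    moreover have "h v \<le> h a" using ancs_depth[OF rt aVt va(1)] .
    ultimately have "a = v" using ancs_depth_eq[OF rt assms(1,2)] bv by simp
    then show False using va(2) by simp
  qed
  then show ?thesis unfolding D_def using vb by simp
qed

definition g :: "'a \<Rightarrow> 'a + nat" where
  "g x = (if x = w then Inr 0 else if x = u then Inl w else Inl x)"
definition ginv :: "'a + nat \<Rightarrow> 'a" where
  "ginv y = (case y of Inl a \<Rightarrow> if a = w then u else a | Inr _ \<Rightarrow> w)"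
definition Q :: "'a + nat" where "Q = Inr 1"
definition Lf :: "'a + nat" where "Lf = Inl u"

lemma ginv_g[simp]: "ginv (g x) = x"
  using uw by (simp add: g_def ginv_def)
lemma g_inj[simp]: "g x = g y \<longleftrightarrow> x = y" by (metis ginv_g)
lemma g_Q[simp]: "g x \<noteq> Q" "Q \<noteq> g x" by (simp_all add: g_def Q_def)
lemma g_L[simp]: "g x \<noteq> Lf" "Lf \<noteq> g x" using uw by (simp_all add: g_def Lf_def)
lemma QL[simp]: "Q \<noteq> Lf" "Lf \<noteq> Q" by (simp_all add: Lf_def Q_def)
lemma g_Inl: "x \<in> V \<Longrightarrow> x \<noteq> u \<Longrightarrow> g x = Inl x" using wV by (auto simp: g_def)
lemma g_u: "g u = Inl w" using uw by (simp add: g_def)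

definition P' :: "'a + nat \<Rightarrow> 'a + nat" where
  "P' y = (if y = Lf \<or> y = Q then g v else if P (ginv y) = v then Q else g (P (ginv y)))"
definition lb' :: "'a + nat \<Rightarrow> 'a + nat" where
  "lb' y = (if y = g v then Q else if y = Q then g (lb v) else g (lb (ginv y)))"
definition c' :: "'a + nat \<Rightarrow> ('a + nat) set" where
  "c' y = (if y = Q then {} else if y = Lf then insert Q (g ` {z \<in> c u. D z})
     else if y = g u then insert Lf (g ` {z \<in> c u. h z \<le> h v})
     else g ` c (ginv y) \<union> (if E (ginv y) then {Q} else {}))"
definition T' :: "('a + nat) btree" where
  "T' = \<lparr>tverts = insert Lf (insert Q (g ` Vt)), troot = g r, tpar = P', tlb = lb', tc = c'\<rparr>"
definition h' :: "'a + nat \<Rightarrow> nat" where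
  "h' y = (if y = Lf \<or> y = Q then Suc (h v) else h (ginv y) + (if D (ginv y) then 1 else 0))"

lemma T'_simps[simp]: "tverts T' = insert Lf (insert Q (g ` Vt))" "troot T' = g r"
  "tpar T' = P'" "tlb T' = lb'" "tc T' = c'"
  by (simp_all add: T'_def)

lemma P'_simps[simp]: "P' Lf = g v" "P' Q = g v" "P' (g x) = (if P x = v then Q else g (P x))"
  by (simp_all add: P'_def)
lemma h'_simps[simp]: "h' Lf = Suc (h v)" "h' Q = Suc (h v)" "h' (g x) = h x + (if D x then 1 else 0)"
  by (simp_all add: h'_def)
lemma lb'_simps[simp]: "lb' (g v) = Q" "lb' Q = g (lb v)" "x \<noteq> v \<Longrightarrow> lb' (g x) = g (lb x)"
  by (simp_all add: lb'_def)
lemma c'_simps[simp]: "c' Q = {}" "c' Lf = insert Q (g ` {z \<in> c u. D z})"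
  "c' (g u) = insert Lf (g ` {z \<in> c u. h z \<le> h v})"
  "x \<noteq> u \<Longrightarrow> c' (g x) = g ` c x \<union> (if E x then {Q} else {})"
  by (simp_all add: c'_def)

lemma T'_cases:
  assumes "y \<in> tverts T'"
  obtains "y = Lf" | "y = Q" | x where "x \<in> Vt" "y = g x"
  using assms by auto

lemma finVt: "finite Vt" using rt unfolding rooted_tree_def by simp
lemma rVt: "r \<in> Vt" using rt_root[OF rt] .

lemma T'_height:
  shows "rooted_tree T'" "\<And>y. y \<in> tverts T' \<Longrightarrow> depth T' y = h' y"
proof -
  have fin: "finite (tverts T')" using finVt by simp
  have r: "troot T' \<in> tverts T'" using rVt by simp
  have step: "tpar T' y \<in> tverts T' \<and> h' y = Suc (h' (tpar T' y))"
    if y: "y \<in> tverts T'" "y \<noteq> troot T'" for y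
  proof (cases rule: T'_cases[OF y(1)])
    case 1 then show ?thesis using vVt D_v by simp
  next
    case 2 then show ?thesis using vVt D_v by simp
  next
    case (3 x)
    have xr: "x \<noteq> r" using y 3 by simp
    have dp: "h x = Suc (h (P x))" "P x \<in> Vt" using rt_depth_par[OF rt 3(1) xr] by auto
    show ?thesis
    proof (cases "P x = v")
      case True
      have "D x" using D_step(1)[OF 3(1) xr True] .
      then show ?thesis using 3 True dp by simp
    next
      case False
      have "D x = D (P x)" using D_step(2)[OF 3(1) xr False] .
      then show ?thesis using 3 False dp by simp
    qed
  qed
  have zero: "h' y = 0 \<longleftrightarrow> y = troot T'" if y: "y \<in> tverts T'" for y
  proof (cases rule: T'_cases[OF y])
    case 1 then show ?thesis by simp
  next
    case 2 then show ?thesis by simp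
  next
    case (3 x)
    have "h x = 0 \<longleftrightarrow> x = r" using rt_depth_zero[OF rt 3(1)] .
    then show ?thesis using 3 D_root by auto
  qed
  show "rooted_tree T'" using tree_by_height(1)[of T' h'] fin r step zero by blast
  show "\<And>y. y \<in> tverts T' \<Longrightarrow> depth T' y = h' y" using tree_by_height(2)[of T' h'] fin r step zero by blast
qed

lemma rt': "rooted_tree T'" using T'_height(1) .

lemma gVt': "x \<in> Vt \<Longrightarrow> g x \<in> tverts T'" by simp
lemma QVt': "Q \<in> tverts T'" by simp
lemma LVt': "Lf \<in> tverts T'" by simp

lemma depth'_simps:
  "depth T' Lf = Suc (h v)" "depth T' Q = Suc (h v)"
  "x \<in> Vt \<Longrightarrow> depth T' (g x) = h x + (if D x then 1 else 0)"
  using T'_height(2)[OF LVt'] T'_height(2)[OF QVt'] T'_height(2)[OF gVt', of x] by simp_all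

lemma an'_Q: "ancs T' Q = insert Q (ancs T' (g v))"
  using ancs_step[OF rt' QVt'] by simp
lemma an'_L: "ancs T' Lf = insert Lf (ancs T' (g v))"
  using ancs_step[OF rt' LVt'] by simp

lemma an'_g: assumes "x \<in> Vt" shows "ancs T' (g x) = g ` an x \<union> (if D x then {Q} else {})"
  using assms
proof (induction x rule: ancs_induct[OF rt, consumes 1, case_names 1 2])
  case 1
  then show ?case using ancs_root[OF rt] ancs_root[OF rt'] D_root by simp
next
  case (2 x)
  have gx: "g x \<in> tverts T'" "g x \<noteq> troot T'" using 2 by simp_all
  have st': "ancs T' (g x) = insert (g x) (ancs T' (P' (g x)))" using ancs_step[OF rt' gx] by simp
  have st: "an x = insert x (an (P x))" using ancs_step[OF rt 2(1,2)] .
  show ?case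
  proof (cases "P x = v")
    case True
    have "D x" using D_step(1)[OF 2(1,2) True] .
    then show ?thesis using st' st True an'_Q 2(3) D_v by auto
  next
    case False
    have "D x = D (P x)" using D_step(2)[OF 2(1,2) False] .
    then show ?thesis using st' st False 2(3) by auto
  qed
qed

lemma an'_v: "ancs T' (g v) = g ` an v" using an'_g[OF vVt] D_v by simp

lemma ch_gv: "children T' (g v) = {Q, Lf}"
  unfolding children_def by (auto simp: P'_def)
lemma ch_L: "children T' Lf = {}"
  unfolding children_def by (auto simp: P'_def)
lemma ch_Q: "children T' Q = g ` children T v"
  unfolding children_def by (auto simp: P'_def)
lemma ch_g: "x \<noteq> v \<Longrightarrow> children T' (g x) = g ` children T x"
  unfolding children_def by (auto simp: P'_def)

lemma leaf_L: "is_leaf T' Lf" unfolding is_leaf_def using ch_L .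
lemma leaf_Q: "is_leaf T' Q \<longleftrightarrow> is_leaf T v" unfolding is_leaf_def using ch_Q by simp
lemma leaf_gv: "\<not> is_leaf T' (g v)" unfolding is_leaf_def using ch_gv by simp
lemma leaf_g: "x \<noteq> v \<Longrightarrow> is_leaf T' (g x) \<longleftrightarrow> is_leaf T x" unfolding is_leaf_def using ch_g by simp

lemma lb_ch: "x \<in> Vt \<Longrightarrow> \<not> is_leaf T x \<Longrightarrow> lb x \<in> children T x" using bt1 by blast

lemma lb_L: "\<not> is_last_born T' Lf"
proof
  assume "is_last_born T' Lf"
  then obtain y where y: "y \<in> tverts T'" "\<not> is_leaf T' y" "lb' y = Lf" unfolding is_last_born_def by (metis T'_simps(4))
  show False
  proof (cases rule: T'_cases[OF y(1)])
    case 1 then show ?thesis using y leaf_L by simp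
  next
    case 2 then show ?thesis using y by simp
  next
    case (3 x) then show ?thesis using y by (cases "x = v") simp_all
  qed
qed

lemma lb_g:
  assumes x: "x \<in> Vt"
  shows "is_last_born T' (g x) \<longleftrightarrow> is_last_born T x"
proof
  assume "is_last_born T' (g x)"
  then obtain y where y: "y \<in> tverts T'" "\<not> is_leaf T' y" "lb' y = g x" unfolding is_last_born_def by (metis T'_simps(4))
  show "is_last_born T x"
  proof (cases rule: T'_cases[OF y(1)])
    case 1 then show ?thesis using y leaf_L by simp
  next
    case 2
    then have "\<not> is_leaf T v" "lb v = x" using y leaf_Q by simp_all
    then show ?thesis unfolding is_last_born_def using vVt by blast
  next
    case (3 z)
    have zv: "z \<noteq> v" using y 3 by auto
    then have "\<not> is_leaf T z" "lb z = x" using y 3 leaf_g by simp_all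
    then show ?thesis unfolding is_last_born_def using 3 by blast
  qed
next
  assume "is_last_born T x"
  then obtain z where z: "z \<in> Vt" "\<not> is_leaf T z" "lb z = x" unfolding is_last_born_def by auto
  show "is_last_born T' (g x)"
  proof (cases "z = v")
    case True
    then have "Q \<in> tverts T'" "\<not> is_leaf T' Q" "lb' Q = g x" using z leaf_Q by simp_all
    then show ?thesis unfolding is_last_born_def by (simp only: T'_simps) blast
  next
    case False
    then have "g z \<in> tverts T'" "\<not> is_leaf T' (g z)" "lb' (g z) = g x" using z leaf_g by simp_all
    then show ?thesis unfolding is_last_born_def by (simp only: T'_simps) blast
  qed
qed

lemma lbP: "x \<in> Vt \<Longrightarrow> x \<noteq> r \<Longrightarrow> lb' (P' (g x)) = g (lb (P x))"
  by (cases "P x = v") simp_all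

lemma cu_ne: "c u \<noteq> {}" using v_cu by auto

lemma K1:
  assumes y: "y \<in> Vt" and s: "s \<in> an y" and a: "a \<in> an y"
  shows "h s + (if D s then 1 else 0) \<le> h a + (if D a then 1 else 0) \<longleftrightarrow> h s \<le> h a"
proof
  assume "h s \<le> h a"
  then have "s \<in> an a" using ancs_chain[OF rt y s a] by simp
  then have "D s \<Longrightarrow> D a" using D_mono ancs_in[OF rt y a] by blast
  then show "h s + (if D s then 1 else 0) \<le> h a + (if D a then 1 else 0)" using \<open>h s \<le> h a\<close> by auto
next
  assume H: "h s + (if D s then 1 else 0) \<le> h a + (if D a then 1 else 0)"
  show "h s \<le> h a"
  proof (rule ccontr)
    assume "\<not> h s \<le> h a"
    then have lt: "h a < h s" by simp
    then have "a \<in> an s" using ancs_chain[OF rt y a s] by simp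
    then have "D a \<Longrightarrow> D s" using D_mono ancs_in[OF rt y s] by blast
    then show False using H lt by (auto split: if_splits)
  qed
qed

lemma Dchain:
  assumes y: "y \<in> Vt" and s: "s \<in> an y" and vy: "v \<in> an y"
  shows "D s \<longleftrightarrow> h v < h s"
proof
  assume "D s"
  then have "v \<in> an s" "s \<noteq> v" unfolding D_def by auto
  then show "h v < h s" using ancs_depth[OF rt _ \<open>v \<in> an s\<close>] ancs_depth_eq[OF rt _ \<open>v \<in> an s\<close>]
    ancs_in[OF rt y s] by force
next
  assume "h v < h s"
  then have "v \<in> an s" "s \<noteq> v" using ancs_chain[OF rt y vy s] by auto
  then show "D s" unfolding D_def by simp
qed

lemma branch_g:
  assumes x: "x \<in> Vt" "x \<noteq> u" "c x \<noteq> {}"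
  shows "branch_set T' (g (lb (P x))) (c' (g x))"
proof -
  define s where "s = lb (P x)"
  obtain y where y: "y \<in> Vt" "s \<in> an y" "c x = {a \<in> an y. h s \<le> h a}"
    using c_branch[OF x(1,3)] unfolding s_def by metis
  have sVt: "s \<in> Vt" using ancs_in[OF rt y(1,2)] .
  have ds: "depth T' (g s) = h s + (if D s then 1 else 0)" using depth'_simps(3)[OF sVt] .
  have yc: "y \<in> c x" using y ancs_self[OF rt y(1)] ancs_depth[OF rt y(1,2)] by simp
  have exD: "(\<exists>z\<in>c x. D z) \<longleftrightarrow> D y"
  proof
    assume "\<exists>z\<in>c x. D z"
    then obtain z where "z \<in> an y" "D z" using y(3) by auto
    then show "D y" using D_mono[OF y(1)] by blast
  next
    assume "D y" then show "\<exists>z\<in>c x. D z" using yc by blast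
  qed
  have K2: "E x \<longleftrightarrow> D y \<and> h s + (if D s then 1 else 0) \<le> Suc (h v)"
  proof (cases "D y")
    case False then show ?thesis unfolding E_def using exD by simp
  next
    case True
    then have vy: "v \<in> an y" unfolding D_def by simp
    have "v \<in> c x \<longleftrightarrow> h s \<le> h v" using y(3) vy by simp
    moreover have "h s \<le> h v \<longleftrightarrow> h s + (if D s then 1 else 0) \<le> Suc (h v)"
      using Dchain[OF y(1,2) vy] by auto
    ultimately show ?thesis unfolding E_def using exD True by simp
  qed
  have agVt: "\<And>a. a \<in> an y \<Longrightarrow> depth T' (g a) = h a + (if D a then 1 else 0)"
    using depth'_simps(3) ancs_in[OF rt y(1)] by blast
  have "{a' \<in> ancs T' (g y). depth T' (g s) \<le> depth T' a'} =
      g ` {a \<in> an y. h s + (if D s then 1 else 0) \<le> h a + (if D a then 1 else 0)}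
      \<union> (if D y \<and> h s + (if D s then 1 else 0) \<le> Suc (h v) then {Q} else {})"
    unfolding an'_g[OF y(1)] ds using agVt depth'_simps(2) by (auto split: if_splits)
  also have "\<dots> = g ` {a \<in> an y. h s \<le> h a} \<union> (if E x then {Q} else {})"
  proof -
    have "{a \<in> an y. h s + (if D s then 1 else 0) \<le> h a + (if D a then 1 else 0)} = {a \<in> an y. h s \<le> h a}"
    proof (rule Collect_cong)
      fix a show "(a \<in> an y \<and> h s + (if D s then 1 else 0) \<le> h a + (if D a then 1 else 0)) = (a \<in> an y \<and> h s \<le> h a)"
        using K1[OF y(1,2), of a] by blast
    qed
    then show ?thesis using K2 by simp
  qed
  also have "\<dots> = c' (g x)" using y(3) x(2) by simp
  finally have eq: "c' (g x) = {a' \<in> ancs T' (g y). depth T' (g s) \<le> depth T' a'}" by simp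
  have "g s \<in> ancs T' (g y)" using an'_g[OF y(1)] y(2) by simp
  then show ?thesis unfolding s_def[symmetric] using iffD2[OF branch_char[OF rt']] eq gVt'[OF y(1)] by blast
qed

lemma nD_anc_v: "a \<in> an v \<Longrightarrow> \<not> D a"
  using D_mono[OF vVt] D_v by blast

lemma cu_data:
  obtains y where "y \<in> Vt" "lb (P u) \<in> an y" "c u = {a \<in> an y. h (lb (P u)) \<le> h a}"
    "v \<in> an y" "h (lb (P u)) \<le> h v"
proof -
  obtain y where y: "y \<in> Vt" "lb (P u) \<in> an y" "c u = {a \<in> an y. h (lb (P u)) \<le> h a}"
    using c_branch[OF uVt cu_ne] by metis
  then have "v \<in> an y" "h (lb (P u)) \<le> h v" using v_cu by auto
  then show ?thesis using that y by blast
qed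

lemma branch_L: "branch_set T' Q (c' Lf)"
proof -
  obtain y where y: "y \<in> Vt" "lb (P u) \<in> an y" "c u = {a \<in> an y. h (lb (P u)) \<le> h a}"
    "v \<in> an y" "h (lb (P u)) \<le> h v" using cu_data by metis
  have cD: "{z \<in> c u. D z} = {a \<in> an y. D a}"
    using y(3,5) Dchain[OF y(1) _ y(4)] by auto
  show ?thesis
  proof (cases "D y")
    case True
    have agVt: "\<And>a. a \<in> an y \<Longrightarrow> depth T' (g a) = h a + (if D a then 1 else 0)"
      using depth'_simps(3) ancs_in[OF rt y(1)] by blast
    have key: "\<And>a. a \<in> an y \<Longrightarrow> Suc (h v) \<le> h a + (if D a then 1 else 0) \<longleftrightarrow> D a"
      using Dchain[OF y(1) _ y(4)] by auto
    have "{a' \<in> ancs T' (g y). depth T' Q \<le> depth T' a'} = insert Q (g ` {a \<in> an y. D a})"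
      unfolding an'_g[OF y(1)] using True agVt key depth'_simps(2) Dchain[OF y(1) _ y(4)] by force
    then have eq: "c' Lf = {a' \<in> ancs T' (g y). depth T' Q \<le> depth T' a'}" using cD by simp
    have "Q \<in> ancs T' (g y)" using an'_g[OF y(1)] True by simp
    then show ?thesis using iffD2[OF branch_char[OF rt']] eq gVt'[OF y(1)] by blast
  next
    case False
    then have yv: "y = v" using y(4) unfolding D_def by simp
    have e: "{a \<in> an y. D a} = {}" using nD_anc_v yv by auto
    have agVt: "\<And>a. a \<in> an v \<Longrightarrow> depth T' (g a) = h a"
      using depth'_simps(3) ancs_in[OF rt vVt] nD_anc_v by simp
    have "\<And>a. a \<in> an v \<Longrightarrow> h a \<le> h v" using ancs_depth[OF rt vVt] by simp
    then have "{a' \<in> ancs T' Q. depth T' Q \<le> depth T' a'} = {Q}"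
      unfolding an'_Q an'_v using agVt depth'_simps(2) by fastforce
    moreover have ce: "{z \<in> c u. D z} = {}" using cD e by simp
    have "c' Lf = {Q}" by (simp only: c'_simps ce image_empty)
    ultimately have eq: "c' Lf = {a' \<in> ancs T' Q. depth T' Q \<le> depth T' a'}" by simp
    have "Q \<in> ancs T' Q" using an'_Q by simp
    then show ?thesis using iffD2[OF branch_char[OF rt']] eq QVt' by blast
  qed
qed

lemma branch_gu: "branch_set T' (g (lb (P u))) (c' (g u))"
proof -
  define s where "s = lb (P u)"
  obtain y where y: "y \<in> Vt" "s \<in> an y" "c u = {a \<in> an y. h s \<le> h a}"
    "v \<in> an y" "h s \<le> h v" using cu_data unfolding s_def by metis
  have sv: "s \<in> an v" using ancs_chain[OF rt y(1,2,4,5)] .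
  have ds: "depth T' (g s) = h s" using depth'_simps(3)[OF ancs_in[OF rt vVt sv]] nD_anc_v[OF sv] by simp
  have agVt: "\<And>a. a \<in> an v \<Longrightarrow> depth T' (g a) = h a"
    using depth'_simps(3) ancs_in[OF rt vVt] nD_anc_v by simp
  have c1: "{z \<in> c u. h z \<le> h v} = {a \<in> an v. h s \<le> h a}"
  proof (intro equalityI subsetI)
    fix z assume "z \<in> {z \<in> c u. h z \<le> h v}"
    then have "z \<in> an y" "h s \<le> h z" "h z \<le> h v" using y(3) by auto
    then show "z \<in> {a \<in> an v. h s \<le> h a}" using ancs_chain[OF rt y(1) _ y(4)] by simp
  next
    fix z assume "z \<in> {a \<in> an v. h s \<le> h a}"
    then have "z \<in> an v" "h s \<le> h z" by auto
    then show "z \<in> {z \<in> c u. h z \<le> h v}" using y(3) ancs_trans[OF rt y(1,4)] ancs_depth[OF rt vVt] by simp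
  qed
  have "{a' \<in> ancs T' Lf. depth T' (g s) \<le> depth T' a'} = insert Lf (g ` {a \<in> an v. h s \<le> h a})"
    unfolding an'_L an'_v ds using agVt y(5) depth'_simps(1) by auto
  then have eq: "c' (g u) = {a' \<in> ancs T' Lf. depth T' (g s) \<le> depth T' a'}" using c1 by simp
  have "g s \<in> ancs T' Lf" using an'_L an'_v sv by simp
  then show ?thesis unfolding s_def[symmetric] using iffD2[OF branch_char[OF rt']] eq LVt' by blast
qed

lemma bt': "burling_tree T'"
  unfolding burling_tree_def
proof (intro conjI ballI impI)
  show "rooted_tree T'" using rt' .
next
  fix y assume y: "y \<in> tverts T'" and nl: "\<not> is_leaf T' y"
  show "tlb T' y \<in> children T' y"
  proof (cases rule: T'_cases[OF y])
    case 1 then show ?thesis using nl leaf_L by simp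
  next
    case 2
    then have "\<not> is_leaf T v" using nl leaf_Q by simp
    then have "lb v \<in> children T v" using lb_ch vVt by blast
    then show ?thesis using 2 ch_Q by simp
  next
    case (3 x)
    show ?thesis
    proof (cases "x = v")
      case True then show ?thesis using 3 ch_gv by simp
    next
      case False
      then have "\<not> is_leaf T x" using nl leaf_g 3 by simp
      then have "lb x \<in> children T x" using lb_ch 3 by blast
      then show ?thesis using 3 False ch_g by simp
    qed
  qed
next
  fix y assume y: "y \<in> tverts T'" and rl: "y = troot T' \<or> is_last_born T' y"
  show "tc T' y = {}"
  proof (cases rule: T'_cases[OF y])
    case 1 then show ?thesis using rl lb_L by simp
  next
    case 2 then show ?thesis by simp
  next
    case (3 x)
    then have "x = r \<or> is_last_born T x" using rl lb_g by auto
    then have cx: "c x = {}" using c_empty 3 by blast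
    then have "x \<noteq> u" using cu_ne by auto
    moreover have "\<not> E x" using cx unfolding E_def by simp
    ultimately show ?thesis using 3 cx by simp
  qed
next
  fix y assume y: "y \<in> tverts T'" and rl: "y \<noteq> troot T' \<and> \<not> is_last_born T' y"
  show "branch_set T' (tlb T' (tpar T' y)) (tc T' y)"
  proof (cases rule: T'_cases[OF y])
    case 1 then show ?thesis using branch_L by simp
  next
    case 2 then show ?thesis unfolding branch_set_def by simp
  next
    case (3 x)
    have xr: "x \<noteq> r" using rl 3 by simp
    have lbp: "tlb T' (tpar T' y) = g (lb (P x))" using lbP[OF 3(1) xr] 3 by simp
    show ?thesis
    proof (cases "x = u")
      case True then show ?thesis using branch_gu lbp 3 by simp
    next
      case False
      show ?thesis
      proof (cases "c x = {}")
        case True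
        then have "\<not> E x" unfolding E_def by simp
        then have "c' (g x) = {}" using True False by simp
        then show ?thesis using 3 unfolding branch_set_def by simp
      next
        case ne: False
        show ?thesis using branch_g[OF 3(1) False ne] lbp 3 by simp
      qed
    qed
  qed
qed

definition V' where "V' = insert w V"
definition A' where "A' = (A - {(u, v)}) \<union> {(w, v), (w, u)}"

lemma Inl_map: "x \<in> V' \<Longrightarrow> Inl x = (if x = w then g u else if x = u then Lf else g x)"
  unfolding V'_def using g_u g_Inl Lf_def by auto

lemma InlV': "x \<in> V' \<Longrightarrow> Inl x \<in> tverts T'"
  using Inl_map uVt VVt by (auto simp: V'_def)

lemma cu_V: "y \<in> V \<Longrightarrow> y \<in> c u \<Longrightarrow> (D y \<longleftrightarrow> y \<noteq> v)"
proof -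
  assume yV: "y \<in> V" and yc: "y \<in> c u"
  obtain b where b: "b \<in> Vt" "lb (P u) \<in> an b" "c u = {a \<in> an b. h (lb (P u)) \<le> h a}"
    "v \<in> an b" "h (lb (P u)) \<le> h v" using cu_data by metis
  have yb: "y \<in> an b" using yc b(3) by simp
  have hv: "h v \<le> h y" using top_v yV yc by simp
  have "D y \<longleftrightarrow> h v < h y" using Dchain[OF b(1) yb b(4)] .
  moreover have "h v = h y \<longleftrightarrow> y = v"
  proof
    assume e: "h v = h y"
    then have "y \<in> an v" using ancs_chain[OF rt b(1) yb b(4)] by simp
    then show "y = v" using ancs_depth_eq[OF rt vVt] e by simp
  qed simp
  ultimately show "D y \<longleftrightarrow> y \<noteq> v" using hv by auto
qed

lemma cu_le_v:
  assumes yV: "y \<in> V" and yc: "y \<in> c u" and le: "h y \<le> h v"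
  shows "y = v"
proof (rule ccontr)
  assume yv: "y \<noteq> v"
  then have "D y" using cu_V[OF yV yc] by simp
  then have va: "v \<in> an y" unfolding D_def by simp
  have yVt: "y \<in> Vt" using yV VVt by auto
  have "h v \<le> h y" using ancs_depth[OF rt yVt va] .
  then have "h v = h y" using le by simp
  then have "v = y" using ancs_depth_eq[OF rt yVt va] by simp
  then show False using yv by simp
qed

lemma inA_V: "(a, b) \<in> A \<Longrightarrow> a \<in> V \<and> b \<in> V" using AV by auto

lemma A'_iff: "(a, b) \<in> A' \<longleftrightarrow> ((a, b) \<in> A \<and> (a, b) \<noteq> (u, v)) \<or> (a = w \<and> (b = v \<or> b = u))"
  unfolding A'_def by auto

lemma arcs':
  assumes x: "x \<in> V'" and y: "y \<in> V'"
  shows "(x, y) \<in> A' \<longleftrightarrow> Inl y \<in> c' (Inl x)"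
proof -
  have wA: "\<And>b. (w, b) \<notin> A" "\<And>a. (a, w) \<notin> A" using inA_V wV by blast+
  have uA: "\<And>a. (a, u) \<notin> A" using src unfolding is_source_def by blast
  have gu_img: "\<And>S. g u \<in> g ` S \<longleftrightarrow> u \<in> S" by auto
  have L_img: "\<And>S. Lf \<notin> g ` S" by auto
  have gy_img: "\<And>S y. g y \<in> g ` S \<longleftrightarrow> y \<in> S" by auto
  have Iw: "Inl w = g u" using g_u by simp
  have Iu: "Inl u = Lf" using Lf_def by simp
  consider "x = w" | "x = u" | "x \<in> V" "x \<noteq> u" "x \<noteq> w" using x uw unfolding V'_def by auto
  then show ?thesis
  proof cases
    case 1
    then have cx: "c' (Inl x) = insert Lf (g ` {z \<in> c u. h z \<le> h v})" by (simp add: g_u[symmetric])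
    consider "y = w" | "y = u" | "y \<in> V" "y \<noteq> u" "y \<noteq> w" using y uw unfolding V'_def by auto
    then show ?thesis
    proof cases
      case 2
      have "(x, y) \<in> A'" using 1 2 A'_iff by simp
      moreover have "Inl y \<in> c' (Inl x)" using cx 2 Iu by simp
      ultimately show ?thesis by simp
    next
      case y1: 1
      have "(x, y) \<notin> A'" using 1 y1 A'_iff wA vw uw by simp
      moreover have "Inl y \<notin> c' (Inl x)" using cx y1 Iw gu_img u_cu by simp
      ultimately show ?thesis by simp
    next
      case 3
      have "Inl y \<in> c' (Inl x) \<longleftrightarrow> y \<in> c u \<and> h y \<le> h v"
        using cx gy_img by (simp add: g_Inl[OF 3(1,2), symmetric])
      also have "\<dots> \<longleftrightarrow> y = v" using cu_le_v[OF 3(1)] v_cu by auto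
      also have "\<dots> \<longleftrightarrow> (x, y) \<in> A'" using 1 3 A'_iff wA by simp
      finally show ?thesis by simp
    qed
  next
    case 2
    then have cx: "c' (Inl x) = insert Q (g ` {z \<in> c u. D z})" using Iu by simp
    consider "y = w" | "y = u" | "y \<in> V" "y \<noteq> u" "y \<noteq> w" using y uw unfolding V'_def by auto
    then show ?thesis
    proof cases
      case y1: 1
      have "(x, y) \<notin> A'" using 2 y1 A'_iff wA uw by simp
      moreover have "Inl y \<notin> c' (Inl x)" using cx y1 Iw gu_img u_cu by simp
      ultimately show ?thesis by simp
    next
      case y2: 2
      have "(x, y) \<notin> A'" using 2 y2 A'_iff uA uw by simp
      moreover have "Inl y \<notin> c' (Inl x)" using cx y2 Iu L_img by simp
      ultimately show ?thesis by simp
    next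
      case 3
      have "Inl y \<in> c' (Inl x) \<longleftrightarrow> y \<in> c u \<and> D y"
        using cx gy_img by (simp add: g_Inl[OF 3(1,2), symmetric])
      also have "\<dots> \<longleftrightarrow> y \<in> c u \<and> y \<noteq> v" using cu_V[OF 3(1)] by auto
      also have "\<dots> \<longleftrightarrow> (u, y) \<in> A \<and> y \<noteq> v" using arc_iff[OF uV 3(1)] by simp
      also have "\<dots> \<longleftrightarrow> (x, y) \<in> A'" using 2 3 A'_iff uw by auto
      finally show ?thesis by simp
    qed
  next
    case 3
    then have cx: "c' (Inl x) = g ` c x \<union> (if E x then {Q} else {})" by (simp add: g_Inl[OF 3(1,2), symmetric])
    consider "y = w" | "y = u" | "y \<in> V" "y \<noteq> u" "y \<noteq> w" using y uw unfolding V'_def by auto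
    then show ?thesis
    proof cases
      case y1: 1
      have "(x, y) \<notin> A'" using 3 y1 A'_iff wA by simp
      moreover have "Inl y \<notin> c' (Inl x)" using cx y1 Iw gu_img no_into_u[OF 3(1)] by simp
      ultimately show ?thesis by simp
    next
      case y2: 2
      have "(x, y) \<notin> A'" using 3 y2 A'_iff uA by simp
      moreover have "Inl y \<notin> c' (Inl x)" using cx y2 Iu L_img by simp
      ultimately show ?thesis by simp
    next
      case y3: 3
      have "Inl y \<in> c' (Inl x) \<longleftrightarrow> y \<in> c x" using cx gy_img by (simp add: g_Inl[OF y3(1,2), symmetric])
      also have "\<dots> \<longleftrightarrow> (x, y) \<in> A" using arc_iff[OF 3(1) y3(1)] by simp
      also have "\<dots> \<longleftrightarrow> (x, y) \<in> A'" using 3 A'_iff by simp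
      finally show ?thesis by simp
    qed
  qed
qed

lemma mono':
  assumes x: "x \<in> V" and yz: "(x, y) \<in> A" "(x, z) \<in> A" and le: "h y \<le> h z"
  shows "depth T' (Inl y) \<le> depth T' (Inl z)"
proof -
  have yV: "y \<in> V" and zV: "z \<in> V" using yz inA_V by auto
  have yu: "y \<noteq> u" and zu: "z \<noteq> u" using yz src unfolding is_source_def by auto
  have yc: "y \<in> c x" and zc: "z \<in> c x" using arc_iff x yV zV yz by auto
  obtain b where b: "b \<in> Vt" "c x \<subseteq> an b" using c_sub[of x] x VVt yc by blast
  have "h y + (if D y then 1 else 0) \<le> h z + (if D z then 1 else 0)"
    using K1[OF b(1)] b(2) yc zc le by blast
  then show ?thesis using depth'_simps(3) g_Inl[OF yV yu] g_Inl[OF zV zu] yV zV VVt by (metis subsetD)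
qed

lemma dv': "derived_via Inl T' V' A'"
  unfolding derived_via_def
proof (intro conjI ballI)
  show "inj_on Inl V'" by (simp add: inj_on_def)
  show "Inl ` V' \<subseteq> tverts T'" using InlV' by blast
  show "A' \<subseteq> V' \<times> V'"
  proof
    fix p assume p: "p \<in> A'"
    obtain a b where ab: "p = (a, b)" by (cases p)
    show "p \<in> V' \<times> V'" using p ab A'_iff[of a b] inA_V[of a b] uV vV unfolding V'_def by auto
  qed
  fix x y assume x: "x \<in> V'" and y: "y \<in> V'"
  show "(x, y) \<in> A' \<longleftrightarrow> fd_arc T' (Inl x) (Inl y)"
    unfolding fd_arc_def using arcs'[OF x y] InlV'[OF x] InlV'[OF y] by simp
qed

lemma dInl_v: "depth T' (Inl v) = h v"
  using depth'_simps(3)[OF vVt] g_Inl[OF vV uv[symmetric]] D_v by simp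
lemma dInl_u: "depth T' (Inl u) = Suc (h v)"
  using depth'_simps(1) Lf_def by simp

lemma wz: "(w, z) \<in> A' \<Longrightarrow> z = v \<or> z = u"
  using A'_iff inA_V wV by blast

lemma top_wv: "top_arc Inl T' A' w v"
  unfolding top_arc_def using A'_iff wz dInl_v dInl_u by fastforce
lemma bot_wu: "bottom_arc Inl T' A' w u"
  unfolding bottom_arc_def using A'_iff wz dInl_v dInl_u by fastforce

lemma top_keep: "(x, y) \<noteq> (u, v) \<Longrightarrow> top_arc id T A x y \<Longrightarrow> top_arc Inl T' A' x y"
proof -
  assume ne: "(x, y) \<noteq> (u, v)" and ta: "top_arc id T A x y"
  have xy: "(x, y) \<in> A" and all: "\<And>z. (x, z) \<in> A \<Longrightarrow> h y \<le> h z" using ta unfolding top_arc_def by auto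
  have xV: "x \<in> V" using inA_V xy by blast
  have xw: "x \<noteq> w" using xV wV by auto
  show ?thesis unfolding top_arc_def
  proof (intro conjI allI impI)
    show "(x, y) \<in> A'" using xy ne A'_iff by simp
    fix z assume "(x, z) \<in> A'"
    then have xz: "(x, z) \<in> A" using A'_iff xw by simp
    show "depth T' (Inl y) \<le> depth T' (Inl z)" using mono'[OF xV xy xz all[OF xz]] .
  qed
qed

lemma bot_keep: "(x, y) \<noteq> (u, v) \<Longrightarrow> bottom_arc id T A x y \<Longrightarrow> bottom_arc Inl T' A' x y"
proof -
  assume ne: "(x, y) \<noteq> (u, v)" and ta: "bottom_arc id T A x y"
  have xy: "(x, y) \<in> A" and all: "\<And>z. (x, z) \<in> A \<Longrightarrow> h z \<le> h y" using ta unfolding bottom_arc_def by auto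
  have xV: "x \<in> V" using inA_V xy by blast
  have xw: "x \<noteq> w" using xV wV by auto
  show ?thesis unfolding bottom_arc_def
  proof (intro conjI allI impI)
    show "(x, y) \<in> A'" using xy ne A'_iff by simp
    fix z assume "(x, z) \<in> A'"
    then have xz: "(x, z) \<in> A" using A'_iff xw by simp
    show "depth T' (Inl z) \<le> depth T' (Inl y)" using mono'[OF xV xz xy all[OF xz]] .
  qed
qed

end

theorem lemma3p7:
  fixes T :: "'a btree" and V :: "'a set" and A :: "('a \<times> 'a) set" and u v w :: 'a
  assumes "burling_tree T"
    and "oriented_graph V A"
    and "derived_via id T V A"
    and "top_arc id T A u v"
    and "is_source A u"
    and "w \<notin> V"
  shows "\<exists>T' :: ('a + nat) btree.
           burling_tree T' \<and>
           derived_via Inl T' (top_subdiv_vertices V w) (top_subdiv_arcs A u v w) \<and>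
           top_arc Inl T' (top_subdiv_arcs A u v w) w v \<and>
           bottom_arc Inl T' (top_subdiv_arcs A u v w) w u \<and>
           (\<forall>x y. (x, y) \<noteq> (u, v) \<and> top_arc id T A x y \<longrightarrow>
                  top_arc Inl T' (top_subdiv_arcs A u v w) x y) \<and>
           (\<forall>x y. (x, y) \<noteq> (u, v) \<and> bottom_arc id T A x y \<longrightarrow>
                  bottom_arc Inl T' (top_subdiv_arcs A u v w) x y)"
proof -
  interpret L T V A u v w using assms by (rule L.intro)
  have eV: "top_subdiv_vertices V w = V'" unfolding top_subdiv_vertices_def V'_def ..
  have eA: "top_subdiv_arcs A u v w = A'" unfolding top_subdiv_arcs_def A'_def ..
  show ?thesis unfolding eV eA
    using bt' dv' top_wv bot_wu top_keep bot_keep by blast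
qed

end
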